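(* Let $\mathcal{U}$ be a free ultrafilter on $\mathbb{N}$ and ${}^\ast\mathbb{R}=\mathbb{R}^{\mathbb{N}}/\mathcal{U}$. Let $\langle u_n\rangle_{n\in\mathbb{N}}$ be a sequence of real numbers and let $u=[\langle u_n\rangle]\in{}^\ast\mathbb{R}$. If $u$ is finite and $u>u_0$, where $u_0=\operatorname{st}(u)$, then the sequence $\langle u_n\rangle$ possesses a strictly decreasing subsequence.
   Context: A free ultrafilter $\mathcal{U}$ on $\mathbb{N}$ is an ultrafilter containing all cofinite subsets of $\mathbb{N}$. ${}^\ast\mathbb{R}=\mathbb{R}^{\mathbb{N}}/\mathcal{U}$ is the set of equivalence classes of real sequences, two sequences being equivalent iff they agree on a set in $\mathcal{U}$; it is an ordered field with termwise operations and order $[\langle v_n\rangle]<[\langle w_n\rangle]$ iff $\{n: v_n<w_n\}\in\mathcal{U}$, and $\mathbb{R}$ is embedded via constant sequences. An element $u\in{}^\ast\mathbb{R}$ is finite if $-r<u<r$ for some $r\in\mathbb{R}$. For finite $u$, the standard part $\operatorname{st}(u)$ is the unique real number $u_0$ nearest to $u$, i.e. such that $|u-u_0|<\varepsilon$ for every positive real $\varepsilon$. *)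

theory Defs
  imports Complex_Main
begin

definition free_ultrafilter :: "nat set set \<Rightarrow> bool" where
  "free_ultrafilter U \<longleftrightarrow>
     {} \<notin> U \<and>
     (\<forall>A B. A \<in> U \<longrightarrow> B \<in> U \<longrightarrow> A \<inter> B \<in> U) \<and>
     (\<forall>A B. A \<in> U \<longrightarrow> A \<subseteq> B \<longrightarrow> B \<in> U) \<and>
     (\<forall>A. A \<in> U \<or> - A \<in> U) \<and>
     (\<forall>A. finite (- A) \<longrightarrow> A \<in> U)"

text \<open>Elements of the ultrapower are represented by real sequences; all notions
  below depend only on the equivalence class modulo U.
  Order: [v] < [w] iff {n. v n < w n} in U.\<close>
definition hless :: "nat set set \<Rightarrow> (nat \<Rightarrow> real) \<Rightarrow> (nat \<Rightarrow> real) \<Rightarrow> bool" where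
  "hless U v w \<longleftrightarrow> {n. v n < w n} \<in> U"

definition hstar :: "real \<Rightarrow> nat \<Rightarrow> real" where
  "hstar r = (\<lambda>_. r)"

definition hfinite :: "nat set set \<Rightarrow> (nat \<Rightarrow> real) \<Rightarrow> bool" where
  "hfinite U u \<longleftrightarrow> (\<exists>r::real. hless U (hstar (-r)) u \<and> hless U u (hstar r))"

definition st :: "nat set set \<Rightarrow> (nat \<Rightarrow> real) \<Rightarrow> real" where
  "st U u = (THE u0. \<forall>eps>0. hless U (\<lambda>n. \<bar>u n - u0\<bar>) (hstar eps))"

end

theory Submission
  imports Defs
begin

lemma fu_empty: "free_ultrafilter U \<Longrightarrow> {} \<notin> U"
  by (simp add: free_ultrafilter_def)
lemma fu_int: "free_ultrafilter U \<Longrightarrow> A \<in> U \<Longrightarrow> B \<in> U \<Longrightarrow> A \<inter> B \<in> U"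
  by (simp add: free_ultrafilter_def)
lemma fu_mono: "free_ultrafilter U \<Longrightarrow> A \<in> U \<Longrightarrow> A \<subseteq> B \<Longrightarrow> B \<in> U"
  unfolding free_ultrafilter_def by blast
lemma fu_compl: "free_ultrafilter U \<Longrightarrow> A \<notin> U \<Longrightarrow> - A \<in> U"
  unfolding free_ultrafilter_def by blast
lemma fu_cofin: "free_ultrafilter U \<Longrightarrow> finite (- A) \<Longrightarrow> A \<in> U"
  unfolding free_ultrafilter_def by blast

lemma fu_nonempty: "free_ultrafilter U \<Longrightarrow> A \<in> U \<Longrightarrow> \<exists>x. x \<in> A"
  using fu_empty[of U] by (cases "A = {}") auto

lemma st_exists:
  assumes U: "free_ultrafilter U" and f: "hfinite U u"
  shows "\<exists>s. \<forall>eps>0. hless U (\<lambda>n. \<bar>u n - s\<bar>) (hstar eps)"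
proof -
  obtain r where r1: "{n. - r < u n} \<in> U" and r2: "{n. u n < r} \<in> U"
    using f unfolding hfinite_def hless_def hstar_def by auto
  define A where "A = {x. {n. x < u n} \<in> U}"
  have nA: "-r \<in> A" using r1 A_def by simp
  have bd: "x \<le> r" if "x \<in> A" for x
  proof (rule ccontr)
    assume "\<not> x \<le> r"
    have "{n. x < u n} \<inter> {n. u n < r} \<in> U" using fu_int[OF U] that r2 A_def by simp
    moreover have "{n. x < u n} \<inter> {n. u n < r} = {}" using \<open>\<not> x \<le> r\<close> by auto
    ultimately show False using fu_empty[OF U] by simp
  qed
  define s where "s = Sup A"
  have bddA: "bdd_above A" using bd by (auto simp: bdd_above_def)
  show ?thesis
  proof (intro exI allI impI)
    fix eps :: real assume e: "eps > 0"
    obtain a where a: "a \<in> A" "s - eps < a"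
      proof -
      have "A \<noteq> {}" using nA by blast
      moreover have "s - eps < Sup A" using e s_def by simp
      ultimately show ?thesis using less_cSupE[of "s - eps" A] that by blast
    qed
    have 1: "{n. s - eps < u n} \<in> U"
    proof (rule fu_mono[OF U, of "{n. a < u n}"])
      show "{n. a < u n} \<in> U" using a A_def by simp
      show "{n. a < u n} \<subseteq> {n. s - eps < u n}" using a by auto
    qed
    have "s + eps/2 \<notin> A"
      proof
      assume "s + eps/2 \<in> A"
      hence "s + eps/2 \<le> s" using cSup_upper[OF _ bddA] s_def by blast
      thus False using e by simp
    qed
    hence 2: "- {n. s + eps/2 < u n} \<in> U" using fu_compl[OF U] A_def by simp
    have "{n. s - eps < u n} \<inter> - {n. s + eps/2 < u n} \<in> U" using fu_int[OF U 1 2] .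
    moreover have "{n. s - eps < u n} \<inter> - {n. s + eps/2 < u n} \<subseteq> {n. \<bar>u n - s\<bar> < eps}"
      using e by auto
    ultimately show "hless U (\<lambda>n. \<bar>u n - s\<bar>) (hstar eps)"
      unfolding hless_def hstar_def by (rule fu_mono[OF U])
  qed
qed

lemma st_unique:
  assumes U: "free_ultrafilter U"
    and a: "\<forall>eps>0. hless U (\<lambda>n. \<bar>u n - s\<bar>) (hstar eps)"
    and b: "\<forall>eps>0. hless U (\<lambda>n. \<bar>u n - t\<bar>) (hstar eps)"
  shows "t = s"
proof (rule ccontr)
  assume "t \<noteq> s"
  define e where "e = \<bar>t - s\<bar>/2"
  have e: "e > 0" using \<open>t \<noteq> s\<close> e_def by simp
  have "{n. \<bar>u n - s\<bar> < e} \<inter> {n. \<bar>u n - t\<bar> < e} \<in> U"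
    using fu_int[OF U] a b e unfolding hless_def hstar_def by auto
  moreover have "{n. \<bar>u n - s\<bar> < e} \<inter> {n. \<bar>u n - t\<bar> < e} = {}"
    using e_def by auto
  ultimately show False using fu_empty[OF U] by simp
qed

lemma st_prop:
  assumes U: "free_ultrafilter U" and f: "hfinite U u"
  shows "\<forall>eps>0. hless U (\<lambda>n. \<bar>u n - st U u\<bar>) (hstar eps)"
proof -
  obtain s where s: "\<forall>eps>0. hless U (\<lambda>n. \<bar>u n - s\<bar>) (hstar eps)"
    using st_exists[OF U f] by blast
  have "st U u = s" unfolding st_def
    using st_unique[OF U s] s by (rule the_equality[rotated]) 
  thus ?thesis using s by simp
qed

theorem proposition3p5:
  fixes U :: "nat set set" and u :: "nat \<Rightarrow> real"
  assumes "free_ultrafilter U"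
    and "hfinite U u"
    and "hless U (hstar (st U u)) u"
  shows "\<exists>r::nat \<Rightarrow> nat. strict_mono r \<and> (\<forall>k. u (r (Suc k)) < u (r k))"
proof -
  note U = assms(1)
  define s where "s = st U u"
  have P: "{n. \<bar>u n - s\<bar> < eps} \<in> U" if "eps > 0" for eps
    using st_prop[OF U assms(2)] that unfolding s_def hless_def hstar_def by auto
  have G: "{n. s < u n} \<in> U" using assms(3) unfolding s_def hless_def hstar_def by simp
  have step: "\<exists>n>m. s < u n \<and> u n < u m" if "s < u m" for m
  proof -
    have c: "{n. m < n} \<in> U"
      by (rule fu_cofin[OF U]) (simp add: Compl_eq not_less)
    have "({n. \<bar>u n - s\<bar> < u m - s} \<inter> {n. s < u n}) \<inter> {n. m < n} \<in> U"
    proof -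
      have "u m - s > 0" using that by simp
      from P[OF this] have "{n. \<bar>u n - s\<bar> < u m - s} \<in> U" .
      thus ?thesis using fu_int[OF U fu_int[OF U _ G] c] by blast
    qed
    then obtain n where "n \<in> ({n. \<bar>u n - s\<bar> < u m - s} \<inter> {n. s < u n}) \<inter> {n. m < n}"
      using fu_nonempty[OF U] by blast
    thus ?thesis by auto
  qed
  obtain n0 where n0: "s < u n0" using fu_nonempty[OF U G] by auto
  define f where "f m = (SOME n. n > m \<and> s < u n \<and> u n < u m)" for m
  have fs: "f m > m \<and> s < u (f m) \<and> u (f m) < u m" if "s < u m" for m
    using someI_ex[OF step[OF that]] f_def by simp
  define r where "r k = (f ^^ k) n0" for k
  have inv: "s < u (r k)" for k
  proof (induction k)
    case 0 thus ?case by (simp add: r_def n0)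
  next
    case (Suc k) thus ?case using fs[OF Suc.IH] by (simp add: r_def)
  qed
  have rs: "r (Suc k) = f (r k)" for k by (simp add: r_def)
  have "strict_mono r"
    unfolding strict_mono_Suc_iff
  proof
    fix n show "r n < r (Suc n)" using fs[OF inv[of n]] rs[of n] by simp
  qed
  moreover have "\<forall>k. u (r (Suc k)) < u (r k)"
  proof
    fix k show "u (r (Suc k)) < u (r k)" using fs[OF inv[of k]] rs[of k] by simp
  qed
  ultimately show ?thesis by blast
qed

end
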